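(* Let $n\ge2$ and let $X_1,\dots,X_n$ be real-valued mutually independent random variables with $X_{n:n}=\max_i X_i\in\mathcal{L}$. Suppose either (a) $X_{n:n}\in\mathrm{GMDA}(h)\cap\mathcal{L}$ for some positive $h$ and $$\lim_{x\to\infty}\frac{\mathbb{P}(X_i>Lh(x))\,\mathbb{P}(X_j>Lh(x))}{\mathbb{P}(X_{n:n}>x)}=0\ \text{for all }1\le i\ne j\le n\text{ and some }L>0,\qquad(\dagger)$$ or (b) there exists $h\in\mathcal{H}^\ast_{X_{n:n}}$ such that $(\dagger)$ holds. Then $\mathbb{P}\big(\sum_{i=1}^nX_i>x\big)\sim\sum_{i=1}^n\mathbb{P}(X_i>x)$ as $x\to\infty$.
   Context: Real-valued random variables are assumed not concentrated on $(-\infty,0]$. For a distribution function $F$, $\overline{F}=1-F$, $x_F=\sup\{x:F(x)<1\}$. $F\in\mathrm{GMDA}(h)$ means $\lim_{x\to x_F}\overline{F}(x+yh(x))/\overline{F}(x)=e^{-y}$ for all $y\in\mathbb{R}$. $F\in\mathcal{L}$ means $\overline{F}(x)>0$ for all $x\ge0$ and $\overline{F}(x+y)\sim\overline{F}(x)$ for every $y\in\mathbb{R}$. For $F\in\mathcal{L}$, $\mathcal{H}_F$ is the set of eventually positive $h$ with $h(x)=o(x)$, $\overline{F}(x+yh(x))\sim\overline{F}(x)$ for all $y\in\mathbb{R}$, and $\limsup_{x\to\infty}h(x+yh(x))/h(x)<\infty$ for all $y\in\mathbb{R}$; $\mathcal{H}^\ast_F=\{h\in\mathcal{H}_F:h(x)\to\infty\}$.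 *)

theory Defs
  imports "HOL-Probability.Probability" "HOL-Library.Landau_Symbols"
begin

definition tail :: "'a measure \<Rightarrow> ('a \<Rightarrow> real) \<Rightarrow> real \<Rightarrow> real" where
  "tail M Y x = measure M {\<omega> \<in> space M. Y \<omega> > x}"

definition right_endpoint :: "(real \<Rightarrow> real) \<Rightarrow> ereal" where
  "right_endpoint Fbar = Sup {ereal x | x. Fbar x > 0}"

definition endpoint_filter :: "(real \<Rightarrow> real) \<Rightarrow> real filter" where
  "endpoint_filter Fbar =
     (if right_endpoint Fbar = \<infinity> then at_top
      else at_left (real_of_ereal (right_endpoint Fbar)))"

definition GMDA :: "(real \<Rightarrow> real) \<Rightarrow> (real \<Rightarrow> real) \<Rightarrow> bool" where
  "GMDA Fbar h \<longleftrightarrow>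
     (\<forall>y::real. ((\<lambda>x. Fbar (x + y * h x) / Fbar x) \<longlongrightarrow> exp (- y)) (endpoint_filter Fbar))"

definition long_tailed :: "(real \<Rightarrow> real) \<Rightarrow> bool" where
  "long_tailed Fbar \<longleftrightarrow>
     (\<forall>x\<ge>0. Fbar x > 0) \<and> (\<forall>y::real. (\<lambda>x. Fbar (x + y)) \<sim>[at_top] Fbar)"

definition H_class :: "(real \<Rightarrow> real) \<Rightarrow> (real \<Rightarrow> real) set" where
  "H_class Fbar = {h. eventually (\<lambda>x. h x > 0) at_top
      \<and> h \<in> o[at_top](\<lambda>x. x)
      \<and> (\<forall>y::real. (\<lambda>x. Fbar (x + y * h x)) \<sim>[at_top] Fbar)
      \<and> (\<forall>y::real. Limsup at_top (\<lambda>x. ereal (h (x + y * h x) / h x)) < \<infinity>)}"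

definition H_star :: "(real \<Rightarrow> real) \<Rightarrow> (real \<Rightarrow> real) set" where
  "H_star Fbar = {h \<in> H_class Fbar. filterlim h at_top at_top}"

end

theory Submission
  imports Defs
begin


context prob_space begin

lemma tail_antimono: "x \<le> y \<Longrightarrow> Y \<in> borel_measurable M \<Longrightarrow> tail M Y y \<le> tail M Y x"
  unfolding tail_def by (intro finite_measure_mono) auto

lemma tail_nonneg: "tail M Y x \<ge> 0"
  unfolding tail_def by simp

lemma tail_tendsto0:
  assumes Y: "Y \<in> borel_measurable M"
  shows "(tail M Y \<longlongrightarrow> 0) at_top"
proof -
  have "(\<lambda>n. measure M {\<omega>\<in>space M. Y \<omega> > real n}) \<longlonglongrightarrow> measure M (\<Inter>n. {\<omega>\<in>space M. Y \<omega> > real n})"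
    using Y by (intro finite_Lim_measure_decseq) (auto simp: decseq_def)
  also have "(\<Inter>n. {\<omega>\<in>space M. Y \<omega> > real n}) = {}"
    by auto (meson linorder_not_less real_arch_simple)
  finally have 1: "(\<lambda>n. - tail M Y (real n)) \<longlonglongrightarrow> - 0"
    unfolding tail_def by (intro tendsto_minus) simp
  have "((\<lambda>x. - tail M Y x) \<longlongrightarrow> - 0) at_top"
    by (rule tendsto_at_topI_sequentially_real[OF _ 1]) (auto simp: mono_def intro: tail_antimono[OF _ Y])
  then show ?thesis using tendsto_minus_cancel by fastforce
qed

lemma indep_pair:
  assumes ind: "indep_vars (\<lambda>_. borel) X I" and i: "i \<in> I" and j: "j \<in> I" and ij: "i \<noteq> j"
    and A: "A \<in> sets borel" and B: "B \<in> sets borel"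
  shows "prob {\<omega>\<in>space M. X i \<omega> \<in> A \<and> X j \<omega> \<in> B} =
         prob {\<omega>\<in>space M. X i \<omega> \<in> A} * prob {\<omega>\<in>space M. X j \<omega> \<in> B}"
proof -
  have isets: "indep_sets (\<lambda>i. { X i -` A \<inter> space M | A. A \<in> sets borel}) I"
    and rv: "\<forall>i\<in>I. random_variable borel (X i)"
    using ind unfolding indep_vars_def2 by auto
  define F where "F = (\<lambda>k. if k = i then X i -` A \<inter> space M else X j -` B \<inter> space M)"
  have "F \<in> Pi {i,j} (\<lambda>i. { X i -` A \<inter> space M | A. A \<in> sets borel})"
    using A B ij by (auto simp: F_def)
  then have "prob (\<Inter>k\<in>{i,j}. F k) = (\<Prod>k\<in>{i,j}. prob (F k))"
    proof -
    have "{i,j} \<subseteq> I" "{i,j} \<noteq> {}" "finite {i,j}" using i j by auto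
    then show ?thesis using isets \<open>F \<in> _\<close> unfolding indep_sets_def by blast
  qed
  moreover have "(\<Inter>k\<in>{i,j}. F k) = {\<omega>\<in>space M. X i \<omega> \<in> A \<and> X j \<omega> \<in> B}"
    using ij by (auto simp: F_def)
  ultimately show ?thesis using ij by (auto simp: F_def Int_def conj_commute)
qed

lemma bonferroni2:
  assumes "finite I" "B ` I \<subseteq> events"
  shows "(\<Sum>i\<in>I. prob (B i)) \<le> prob (\<Union>i\<in>I. B i) + (\<Sum>i\<in>I. \<Sum>j\<in>I-{i}. prob (B i \<inter> B j))"
proof -
  define C where "C i = B i - (\<Union>j\<in>I-{i}. B j)" for i
  have Cs: "C ` I \<subseteq> events" using assms unfolding C_def by auto
  have disj: "disjoint_family_on C I" unfolding disjoint_family_on_def C_def by auto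
  have "prob (B i) \<le> prob (C i) + (\<Sum>j\<in>I-{i}. prob (B i \<inter> B j))" if i: "i \<in> I" for i
  proof -
    have "B i \<subseteq> C i \<union> (\<Union>j\<in>I-{i}. B i \<inter> B j)" unfolding C_def by auto
    have U: "(\<Union>j\<in>I-{i}. B i \<inter> B j) \<in> events"
      by (rule sets.finite_UN) (use assms i in auto)
    have "prob (B i) \<le> prob (C i \<union> (\<Union>j\<in>I-{i}. B i \<inter> B j))"
      using assms Cs i U \<open>B i \<subseteq> _\<close> by (intro finite_measure_mono) auto
    also have "\<dots> \<le> prob (C i) + prob (\<Union>j\<in>I-{i}. B i \<inter> B j)"
      by (rule measure_subadditive) (use assms Cs i U in auto)
    also have "prob (\<Union>j\<in>I-{i}. B i \<inter> B j) \<le> (\<Sum>j\<in>I-{i}. prob (B i \<inter> B j))"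
      by (rule finite_measure_subadditive_finite) (use assms i in auto)
    finally show ?thesis by simp
  qed
  then have "(\<Sum>i\<in>I. prob (B i)) \<le> (\<Sum>i\<in>I. prob (C i) + (\<Sum>j\<in>I-{i}. prob (B i \<inter> B j)))"
    by (rule sum_mono)
  also have "\<dots> = prob (\<Union>i\<in>I. C i) + (\<Sum>i\<in>I. \<Sum>j\<in>I-{i}. prob (B i \<inter> B j))"
    by (simp add: sum.distrib finite_measure_finite_Union[OF assms(1) Cs disj])
  also have "prob (\<Union>i\<in>I. C i) \<le> prob (\<Union>i\<in>I. B i)"
    using assms by (intro finite_measure_mono) (auto simp: C_def)
  finally show ?thesis by simp
qed

end


lemma endpoint_inf:
  assumes pos: "\<forall>x\<ge>0. Fb x > 0"
  shows "endpoint_filter Fb = at_top"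
proof -
  have "\<Squnion>{ereal x |x. 0 < Fb x} = (\<top>::ereal)"
    unfolding Sup_eq_top_iff
  proof (intro allI impI)
    fix z :: ereal assume "z < \<top>"
    then obtain r where "z \<le> ereal r" by (cases z) auto
    then have "z < ereal (max r 0 + 1)" by (simp add: le_less_trans)
    moreover have "Fb (max r 0 + 1) > 0" using pos by simp
    ultimately show "\<exists>i\<in>{ereal x |x. 0 < Fb x}. z < i" by blast
  qed
  then have "right_endpoint Fb = \<infinity>" unfolding right_endpoint_def top_ereal_def .
  then show ?thesis unfolding endpoint_filter_def by simp
qed

lemma extract_props:
  fixes Fb h :: "real \<Rightarrow> real" and c :: real
  assumes anti: "\<And>x y. x \<le> y \<Longrightarrow> Fb y \<le> Fb x"
    and pos: "\<forall>x\<ge>0. Fb x > 0" and lim0: "(Fb \<longlongrightarrow> 0) at_top" and c: "c > 0"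
    and hyp: "((\<forall>x. h x > 0) \<and> GMDA Fb h) \<or> h \<in> H_star Fb"
  shows "eventually (\<lambda>x. h x > 0) at_top \<and> eventually (\<lambda>x. c * h x < x) at_top
     \<and> (\<exists>B>0. eventually (\<lambda>x. Fb (x - c * h x) \<le> B * Fb x) at_top)"
  using hyp
proof
  assume a: "(\<forall>x. h x > 0) \<and> GMDA Fb h"
  have "((\<lambda>x. Fb (x + (-c) * h x) / Fb x) \<longlongrightarrow> exp (- (-c))) at_top"
    using a endpoint_inf[OF pos] unfolding GMDA_def by metis
  then have "((\<lambda>x. Fb (x - c * h x) / Fb x) \<longlongrightarrow> exp c) at_top" by simp
  then have ev1: "eventually (\<lambda>x. Fb (x - c * h x) / Fb x < exp c + 1) at_top"
    by (rule order_tendstoD) simp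
  have "Fb 0 / (exp c + 1) > 0" using pos by (simp add: add_pos_pos)
  then have ev2: "eventually (\<lambda>x. Fb x < Fb 0 / (exp c + 1)) at_top"
    using order_tendstoD(2)[OF lim0] by blast
  have ev3: "eventually (\<lambda>x::real. x \<ge> 0) at_top" by (rule eventually_ge_at_top)
  have "eventually (\<lambda>x. c * h x < x \<and> Fb (x - c * h x) \<le> (exp c + 1) * Fb x) at_top"
    using ev1 ev2 ev3
  proof eventually_elim
    case (elim x)
    have Fx: "Fb x > 0" using pos elim(3) by simp
    have e0: "exp c + 1 > 0" by (simp add: add_pos_pos)
    have lt: "Fb (x - c * h x) < (exp c + 1) * Fb x"
      using elim(1) Fx by (simp add: divide_less_eq mult.commute)
    moreover have "c * h x < x"
    proof (rule ccontr)
      assume "\<not> c * h x < x"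
      then have "Fb 0 \<le> Fb (x - c * h x)" by (intro anti) simp
      moreover have "(exp c + 1) * Fb x < Fb 0" using elim(2) e0 by (simp add: less_divide_eq mult.commute)
      ultimately show False using lt by simp
    qed
    ultimately show ?case by simp
  qed
  then show ?thesis using a
    by (auto intro!: exI[of _ "exp c + 1"] add_pos_pos elim: eventually_mono)
next
  assume a: "h \<in> H_star Fb"
  then have hp: "eventually (\<lambda>x. h x > 0) at_top" and ho: "h \<in> o[at_top](\<lambda>x. x)"
    and ins: "(\<lambda>x. Fb (x + (-c) * h x)) \<sim>[at_top] Fb"
    unfolding H_star_def H_class_def by blast+
  have "eventually (\<lambda>x. norm (h x) \<le> (1 / (2*c)) * norm x) at_top"
    using landau_o.smallD[OF ho, of "1/(2*c)"] c by simp
  then have ev1: "eventually (\<lambda>x. c * h x < x) at_top"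
    using hp eventually_gt_at_top[of 0]
  proof eventually_elim
    case (elim x)
    then have "h x \<le> x / (2*c)" by simp
    then have "c * h x \<le> x / 2" using c by (simp add: field_simps)
    then show ?case using elim by simp
  qed
  have "((\<lambda>x. if Fb (x + (-c) * h x) = 0 \<and> Fb x = 0 then 1 else Fb (x + (-c) * h x) / Fb x) \<longlongrightarrow> 1) at_top"
    by (rule asymp_equivD[OF ins])
  then have "eventually (\<lambda>x. (if Fb (x + (-c) * h x) = 0 \<and> Fb x = 0 then 1 else Fb (x + (-c) * h x) / Fb x) < 2) at_top"
    by (rule order_tendstoD) simp
  then have "eventually (\<lambda>x. Fb (x - c * h x) \<le> 2 * Fb x) at_top"
    using eventually_ge_at_top[of 0]
  proof eventually_elim
    case (elim x)
    then have "Fb x > 0" using pos by simp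
    with elim show ?case by (simp add: divide_less_eq mult.commute)
  qed
  then show ?thesis using hp ev1 by (intro conjI exI[of _ 2]) auto
qed



lemma ratio_tendsto:
  fixes f g :: "real \<Rightarrow> real"
  assumes "f \<sim>[at_top] g" "eventually (\<lambda>x. g x > 0) at_top"
  shows "((\<lambda>x. f x / g x) \<longlongrightarrow> 1) at_top"
proof -
  have "((\<lambda>x. if f x = 0 \<and> g x = 0 then 1 else f x / g x) \<longlongrightarrow> 1) at_top"
    by (rule asymp_equivD[OF assms(1)])
  moreover have "eventually (\<lambda>x. (if f x = 0 \<and> g x = 0 then 1 else f x / g x) = f x / g x) at_top"
    using assms(2) by eventually_elim auto
  ultimately show ?thesis by (rule Lim_transform_eventually)
qed

context prob_space begin

lemma prob_UN2:
  assumes "finite I" "\<And>i j. i \<in> I \<Longrightarrow> j \<in> I \<Longrightarrow> E i j \<in> events"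
  shows "prob (\<Union>i\<in>I. \<Union>j\<in>I-{i}. E i j) \<le> (\<Sum>i\<in>I. \<Sum>j\<in>I-{i}. prob (E i j))"
proof -
  have "prob (\<Union>i\<in>I. \<Union>j\<in>I-{i}. E i j) \<le> (\<Sum>i\<in>I. prob (\<Union>j\<in>I-{i}. E i j))"
    using assms by (intro finite_measure_subadditive_finite) auto
  also have "\<dots> \<le> (\<Sum>i\<in>I. \<Sum>j\<in>I-{i}. prob (E i j))"
    using assms by (intro sum_mono finite_measure_subadditive_finite) auto
  finally show ?thesis .
qed

end


context prob_space begin

lemma main:
  fixes X :: "nat \<Rightarrow> 'a \<Rightarrow> real" and n :: nat and h :: "real \<Rightarrow> real" and L B :: real
    and Fb St :: "real \<Rightarrow> real" and T :: "nat \<Rightarrow> real \<Rightarrow> real"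
  assumes Xm[measurable]: "\<And>i. X i \<in> borel_measurable M"
    and n2: "n \<ge> 2"
    and ind: "indep_vars (\<lambda>_. borel) X {..<n}"
    and Fb_def: "Fb = tail M (\<lambda>\<omega>. MAX i\<in>{..<n}. X i \<omega>)"
    and T_def: "T = (\<lambda>i. tail M (X i))"
    and St_def: "St = tail M (\<lambda>\<omega>. \<Sum>i<n. X i \<omega>)"
    and lt: "long_tailed Fb"
    and L: "L > 0"
    and hp: "eventually (\<lambda>x. h x > 0) at_top"
    and hs: "eventually (\<lambda>x. (real n * L) * h x < x) at_top"
    and B: "B > 0" "eventually (\<lambda>x. Fb (x - (real (n-1) * L) * h x) \<le> B * Fb x) at_top"
    and dag: "\<forall>i<n. \<forall>j<n. i \<noteq> j \<longrightarrow> ((\<lambda>x. T i (L * h x) * T j (L * h x) / Fb x) \<longlongrightarrow> 0) at_top"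
  shows "St \<sim>[at_top] (\<lambda>x. \<Sum>i<n. T i x)"
proof -
  have fin: "finite {..<n}" by simp
  have ne: "{..<n} \<noteq> {}" using n2 by (metis lessThan_empty_iff not_numeral_le_zero)
  have Tnn: "T i x \<ge> 0" for i x unfolding T_def by (rule tail_nonneg)
  have Fnn: "Fb x \<ge> 0" for x unfolding Fb_def by (rule tail_nonneg)
  have Tanti: "x \<le> y \<Longrightarrow> T i y \<le> T i x" for i x y unfolding T_def by (rule tail_antimono) auto
  have Fanti: "x \<le> y \<Longrightarrow> Fb y \<le> Fb x" for x y unfolding Fb_def by (rule tail_antimono) auto
  have Fpos: "x \<ge> 0 \<Longrightarrow> Fb x > 0" for x using lt unfolding long_tailed_def by auto
  have LT: "((\<lambda>x. Fb (x + y) / Fb x) \<longlongrightarrow> 1) at_top" for y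
    using lt unfolding long_tailed_def
    by (intro ratio_tendsto) (auto intro: eventually_mono[OF eventually_ge_at_top[of 0]] Fpos)
  have F0: "(Fb \<longlongrightarrow> 0) at_top" unfolding Fb_def by (rule tail_tendsto0) measurable
  have T0: "(T i \<longlongrightarrow> 0) at_top" for i unfolding T_def by (rule tail_tendsto0) measurable
  have ev: "{\<omega>\<in>space M. P \<omega>} \<in> events" if "Measurable.pred M P" for P using that by measurable
  have T_le_F: "i < n \<Longrightarrow> T i t \<le> Fb t" for i t
    unfolding T_def Fb_def tail_def
    by (intro finite_measure_mono) (auto intro: less_le_trans[OF _ Max_ge])
  have Mx_eq: "{\<omega>\<in>space M. (MAX i\<in>{..<n}. X i \<omega>) > t} = (\<Union>i\<in>{..<n}. {\<omega>\<in>space M. X i \<omega> > t})" for t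
    using ne by (auto simp: Max_gr_iff)
  have F_le_sum: "Fb t \<le> (\<Sum>i<n. T i t)" for t
    unfolding T_def Fb_def tail_def Mx_eq by (intro finite_measure_subadditive_finite) auto
  have prod: "prob {\<omega>\<in>space M. X i \<omega> > s \<and> X j \<omega> > t} = T i s * T j t"
    if "i < n" "j < n" "i \<noteq> j" for i j s t
    using indep_pair[OF ind _ _ that(3), of "{s<..}" "{t<..}"] that unfolding T_def tail_def by simp
  have prod2: "prob {\<omega>\<in>space M. X i \<omega> > s \<and> X j \<omega> < t} = T i s * tail M (\<lambda>\<omega>. - X j \<omega>) (-t)"
    if "i < n" "j < n" "i \<noteq> j" for i j s t
    using indep_pair[OF ind _ _ that(3), of "{s<..}" "{..<t}"] that unfolding T_def tail_def by simp
  define R where "R x = (\<Sum>i<n. \<Sum>j\<in>{..<n}-{i}. T i (L * h x) * T j (L * h x) / Fb x)" for x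
  have R0: "(R \<longlongrightarrow> 0) at_top"
    unfolding R_def using dag by (intro tendsto_null_sum) auto
  have evx: "eventually (\<lambda>x. h x > 0 \<and> (real n * L) * h x < x) at_top"
    using hp hs by eventually_elim auto
  have gx: "L * h x \<le> x \<and> x > 0" if "h x > 0 \<and> (real n * L) * h x < x" for x
  proof -
    have "L * h x > 0" using L that by simp
    moreover have "real n * (L * h x) < x" using that by (simp add: mult.assoc)
    moreover have "real n \<ge> 2" using n2 by simp
    ultimately show ?thesis by (smt (verit) mult_le_cancel_right1)
  qed
  have bonf: "(\<Sum>i<n. T i x) \<le> Fb x + (\<Sum>i<n. \<Sum>j\<in>{..<n}-{i}. T i x * T j x)" for x
  proof -
    have "(\<Sum>i<n. prob {\<omega>\<in>space M. X i \<omega> > x}) \<le> prob (\<Union>i\<in>{..<n}. {\<omega>\<in>space M. X i \<omega> > x})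
       + (\<Sum>i<n. \<Sum>j\<in>{..<n}-{i}. prob ({\<omega>\<in>space M. X i \<omega> > x} \<inter> {\<omega>\<in>space M. X j \<omega> > x}))"
      by (rule bonferroni2) auto
    also have "(\<Sum>i<n. \<Sum>j\<in>{..<n}-{i}. prob ({\<omega>\<in>space M. X i \<omega> > x} \<inter> {\<omega>\<in>space M. X j \<omega> > x}))
       = (\<Sum>i<n. \<Sum>j\<in>{..<n}-{i}. T i x * T j x)"
      by (intro sum.cong refl) (auto simp: prod[symmetric] intro!: arg_cong[where f=prob])
    finally show ?thesis unfolding Fb_def tail_def Mx_eq[symmetric] by (simp add: T_def tail_def)
  qed
  have sumT_F: "((\<lambda>x. (\<Sum>i<n. T i x) / Fb x) \<longlongrightarrow> 1) at_top"
  proof (rule tendsto_sandwich[of "\<lambda>_. 1" _ _ "\<lambda>x. 1 + R x"])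
    show "eventually (\<lambda>x. 1 \<le> (\<Sum>i<n. T i x) / Fb x) at_top"
      using eventually_ge_at_top[of 0]
    proof eventually_elim
      case (elim x) then show ?case using Fpos[of x] F_le_sum[of x] by simp
    qed
    show "eventually (\<lambda>x. (\<Sum>i<n. T i x) / Fb x \<le> 1 + R x) at_top"
      using evx
    proof eventually_elim
      case (elim x)
      from gx[OF elim] have g: "L * h x \<le> x" "x > 0" by auto
      have Fx: "Fb x > 0" using Fpos g by simp
      have "(\<Sum>i<n. T i x) \<le> Fb x + (\<Sum>i<n. \<Sum>j\<in>{..<n}-{i}. T i x * T j x)" by (rule bonf)
      also have "\<dots> \<le> Fb x + (\<Sum>i<n. \<Sum>j\<in>{..<n}-{i}. T i (L * h x) * T j (L * h x))"
        using g by (intro add_left_mono sum_mono mult_mono Tanti Tnn) auto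
      also have "\<dots> = Fb x * (1 + R x)"
        using Fx by (simp add: R_def sum_divide_distrib[symmetric] field_simps)
      finally show ?case using Fx by (simp add: divide_le_eq mult.commute)
    qed
    show "((\<lambda>x. 1 + R x) \<longlongrightarrow> 1) at_top" using tendsto_add[OF tendsto_const R0] by simp
  qed simp
  have Sdecomp: "(\<Sum>i<n. X i \<omega>) = X k \<omega> + (\<Sum>j\<in>{..<n}-{k}. X j \<omega>)" if "k < n" for k \<omega>
    using that by (subst sum.remove[of _ k]) auto
  have cardk: "real (card ({..<n}-{k})) = real n - 1" if "k < n" for k
    using that by (simp add: of_nat_diff)
  define \<delta> where "\<delta> K = (\<Sum>j<n. tail M (\<lambda>\<omega>. - X j \<omega>) K)" for K
  have \<delta>0: "(\<delta> \<longlongrightarrow> 0) at_top"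
    unfolding \<delta>_def by (intro tendsto_null_sum tail_tendsto0) measurable
  have \<delta>nn: "\<delta> K \<ge> 0" for K unfolding \<delta>_def by (intro sum_nonneg tail_nonneg)
  have pw: "(\<Sum>i<n. T i (x + real n * K)) * (1 - \<delta> K - (\<Sum>j<n. T j (x + real n * K))) \<le> St x"
    if K: "K \<ge> 0" for x K
  proof -
    define a where "a = x + real n * K"
    define Bi where "Bi i = {\<omega>\<in>space M. X i \<omega> > a \<and> (\<forall>j\<in>{..<n}-{i}. X j \<omega> \<ge> -K)}" for i
    have Bev: "Bi i \<in> events" for i unfolding Bi_def by measurable
    have c1: "prob (\<Union>i\<in>{..<n}. Bi i) \<le> St x"
      unfolding St_def tail_def
    proof (intro finite_measure_mono subsetI)
      fix \<omega> assume "\<omega> \<in> (\<Union>i\<in>{..<n}. Bi i)"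
      then obtain i where i: "i < n" "\<omega> \<in> space M" "X i \<omega> > a" "\<forall>j\<in>{..<n}-{i}. X j \<omega> \<ge> -K"
        unfolding Bi_def by auto
      have "(\<Sum>j\<in>{..<n}-{i}. - K) \<le> (\<Sum>j\<in>{..<n}-{i}. X j \<omega>)" using i by (intro sum_mono) auto
      then have "-(real n - 1) * K \<le> (\<Sum>j\<in>{..<n}-{i}. X j \<omega>)" using cardk[OF i(1)] by (simp add: algebra_simps)
      then have "(\<Sum>i<n. X i \<omega>) > a - (real n - 1) * K" using Sdecomp[OF i(1)] i(3) by (simp add: algebra_simps)
      then have "(\<Sum>i<n. X i \<omega>) > x" using K by (simp add: a_def algebra_simps)
      then show "\<omega> \<in> {\<omega> \<in> space M. x < (\<Sum>i<n. X i \<omega>)}" using i by simp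
    qed measurable
    have c2: "(\<Sum>i<n. prob (Bi i)) \<le> prob (\<Union>i\<in>{..<n}. Bi i) + (\<Sum>i<n. \<Sum>j\<in>{..<n}-{i}. prob (Bi i \<inter> Bi j))"
      by (rule bonferroni2) (auto intro: Bev)
    have c3: "prob (Bi i \<inter> Bi j) \<le> T i a * T j a" if "i < n" "j \<in> {..<n}-{i}" for i j
    proof -
      have "prob (Bi i \<inter> Bi j) \<le> prob {\<omega>\<in>space M. X i \<omega> > a \<and> X j \<omega> > a}"
        by (intro finite_measure_mono) (auto simp: Bi_def)
      also have "\<dots> = T i a * T j a" using that by (intro prod) auto
      finally show ?thesis .
    qed
    have c4: "T i a * (1 - \<delta> K) \<le> prob (Bi i)" if i: "i < n" for i
    proof -
      have U: "(\<Union>j\<in>{..<n}-{i}. {\<omega>\<in>space M. X i \<omega> > a \<and> X j \<omega> < -K}) \<in> events"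
        by (intro sets.finite_UN) auto
      have "T i a \<le> prob (Bi i \<union> (\<Union>j\<in>{..<n}-{i}. {\<omega>\<in>space M. X i \<omega> > a \<and> X j \<omega> < -K}))"
        unfolding T_def tail_def using Bev U by (intro finite_measure_mono) (auto simp: Bi_def not_le)
      also have "\<dots> \<le> prob (Bi i) + prob (\<Union>j\<in>{..<n}-{i}. {\<omega>\<in>space M. X i \<omega> > a \<and> X j \<omega> < -K})"
        using Bev U by (intro measure_subadditive) auto
      also have "prob (\<Union>j\<in>{..<n}-{i}. {\<omega>\<in>space M. X i \<omega> > a \<and> X j \<omega> < -K})
          \<le> (\<Sum>j\<in>{..<n}-{i}. prob {\<omega>\<in>space M. X i \<omega> > a \<and> X j \<omega> < -K})"
        by (intro finite_measure_subadditive_finite) auto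
      also have "\<dots> = (\<Sum>j\<in>{..<n}-{i}. T i a * tail M (\<lambda>\<omega>. - X j \<omega>) K)"
        using i by (intro sum.cong refl) (subst prod2, auto)
      also have "\<dots> = T i a * (\<Sum>j\<in>{..<n}-{i}. tail M (\<lambda>\<omega>. - X j \<omega>) K)"
        by (simp add: sum_distrib_left)
      also have "\<dots> \<le> T i a * \<delta> K"
        unfolding \<delta>_def by (intro mult_left_mono sum_mono2 Tnn tail_nonneg) auto
      finally show ?thesis by (simp add: algebra_simps)
    qed
    have "(\<Sum>i<n. T i a * (1 - \<delta> K)) \<le> St x + (\<Sum>i<n. T i a * (\<Sum>j<n. T j a))"
    proof -
      have "(\<Sum>i<n. T i a * (1 - \<delta> K)) \<le> (\<Sum>i<n. prob (Bi i))" by (intro sum_mono c4) auto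
      also have "\<dots> \<le> St x + (\<Sum>i<n. \<Sum>j\<in>{..<n}-{i}. prob (Bi i \<inter> Bi j))" using c1 c2 by simp
      also have "(\<Sum>i<n. \<Sum>j\<in>{..<n}-{i}. prob (Bi i \<inter> Bi j)) \<le> (\<Sum>i<n. \<Sum>j\<in>{..<n}-{i}. T i a * T j a)"
        by (intro sum_mono c3) auto
      also have "\<dots> \<le> (\<Sum>i<n. \<Sum>j<n. T i a * T j a)"
        by (intro sum_mono sum_mono2) (auto intro: mult_nonneg_nonneg Tnn)
      finally show ?thesis by (simp add: sum_distrib_left)
    qed
    then have z: "(\<Sum>i<n. T i a) * (1 - \<delta> K) \<le> St x + (\<Sum>i<n. T i a) * (\<Sum>j<n. T j a)"
      by (simp add: sum_distrib_right)
    have "(\<Sum>i<n. T i a) * (1 - \<delta> K - (\<Sum>j<n. T j a)) = (\<Sum>i<n. T i a) * (1 - \<delta> K) - (\<Sum>i<n. T i a) * (\<Sum>j<n. T j a)"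
      by (simp add: algebra_simps)
    then show ?thesis using z unfolding a_def by linarith
  qed
  have lower: "eventually (\<lambda>x. (1-\<epsilon>)*Fb x \<le> St x) at_top" if \<epsilon>: "0 < \<epsilon>" "\<epsilon> \<le> 1" for \<epsilon>
  proof -
    obtain K0 where K0: "\<And>K. K \<ge> K0 \<Longrightarrow> \<delta> K < \<epsilon>/4"
      using order_tendstoD(2)[OF \<delta>0, of "\<epsilon>/4"] \<epsilon> by (auto simp: eventually_at_top_linorder)
    define K where "K = max K0 0"
    have K: "K \<ge> 0" "\<delta> K < \<epsilon>/4" using K0 by (auto simp: K_def)
    have e1: "eventually (\<lambda>x. Fb (x + real n * K) / Fb x > 1 - \<epsilon>/4) at_top"
      using order_tendstoD(1)[OF LT, of "1 - \<epsilon>/4"] \<epsilon> by simp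
    have "((\<lambda>x. real n * Fb x) \<longlongrightarrow> real n * 0) at_top" by (intro tendsto_mult tendsto_const F0)
    then have e2: "eventually (\<lambda>x. real n * Fb x < \<epsilon>/4) at_top"
      using order_tendstoD(2)[of _ 0 _ "\<epsilon>/4"] \<epsilon> by simp
    show ?thesis using e1 e2 eventually_ge_at_top[of 0]
    proof eventually_elim
      case (elim x)
      define a where "a = x + real n * K"
      have ax: "x \<le> a" using K by (simp add: a_def)
      have Fx: "Fb x > 0" using Fpos elim(3) by simp
      have Fa: "Fb a \<ge> (1 - \<epsilon>/4) * Fb x" using elim(1) Fx by (simp add: a_def less_divide_eq)
      have "(\<Sum>j<n. T j a) \<le> (\<Sum>j<n. Fb a)" by (intro sum_mono T_le_F) auto
      also have "\<dots> = real n * Fb a" by simp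
      also have "\<dots> \<le> real n * Fb x" using ax by (intro mult_left_mono Fanti) auto
      finally have sT: "(\<Sum>j<n. T j a) < \<epsilon>/4" using elim(2) by simp
      have fac: "1 - \<delta> K - (\<Sum>j<n. T j a) \<ge> 1 - \<epsilon>/2" using sT K by simp
      have fac0: "1 - \<epsilon>/2 \<ge> 0" using \<epsilon> by simp
      have "(1-\<epsilon>)*Fb x \<le> (1 - \<epsilon>/4) * (1 - \<epsilon>/2) * Fb x"
        using Fx \<epsilon> by (intro mult_right_mono) (auto simp: algebra_simps)
      also have "\<dots> \<le> Fb a * (1 - \<epsilon>/2)"
        using mult_right_mono[OF Fa fac0] by (simp add: mult_ac)
      also have "\<dots> \<le> (\<Sum>i<n. T i a) * (1 - \<epsilon>/2)"
        using F_le_sum fac0 by (intro mult_right_mono) auto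
      also have "\<dots> \<le> (\<Sum>i<n. T i a) * (1 - \<delta> K - (\<Sum>j<n. T j a))"
        using fac by (intro mult_left_mono sum_nonneg Tnn) auto
      also have "\<dots> \<le> St x" using pw[OF K(1)] by (simp add: a_def)
      finally show ?case .
    qed
  qed
  have rn1: "real (n-1) = real n - 1" using n2 by (simp add: of_nat_diff)
  have upper: "eventually (\<lambda>x. St x \<le> (1+\<epsilon>)*Fb x) at_top" if \<epsilon>: "0 < \<epsilon>" for \<epsilon>
  proof -
    have npos: "real n > 0" using n2 by simp
    define \<eta> where "\<eta> = \<epsilon> / (3 * real n * B)"
    have \<eta>: "\<eta> > 0" using \<epsilon> B npos by (simp add: \<eta>_def)
    have "((\<lambda>K. \<Sum>j<n. T j K) \<longlongrightarrow> 0) at_top" by (intro tendsto_null_sum T0)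
    then have "eventually (\<lambda>K. (\<Sum>j<n. T j K) < \<eta>) at_top" using \<eta> by (rule order_tendstoD(2))
    then obtain K0 where K0: "\<And>K. K \<ge> K0 \<Longrightarrow> (\<Sum>j<n. T j K) < \<eta>"
      by (auto simp: eventually_at_top_linorder)
    define K where "K = max K0 0"
    have K: "K \<ge> 0" "(\<Sum>j<n. T j K) < \<eta>" using K0 by (auto simp: K_def)
    have e1: "eventually (\<lambda>x. Fb (x + (- (real (n-1) * K))) / Fb x < 1 + \<epsilon>/3) at_top"
      using order_tendstoD(2)[OF LT[of "- (real (n-1) * K)"], of "1 + \<epsilon>/3"] \<epsilon> by simp
    have e2: "eventually (\<lambda>x. R x < \<epsilon>/3) at_top"
      using order_tendstoD(2)[OF R0, of "\<epsilon>/3"] \<epsilon> by simp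
    show ?thesis using e1 e2 evx B(2) eventually_ge_at_top[of 0]
    proof eventually_elim
      case (elim x)
      define g where "g = L * h x"
      define y where "y = x - (real (n-1) * L) * h x"
      have g: "g > 0" "real n * g < x" using elim(3) L by (auto simp: g_def mult.assoc)
      have Fx: "Fb x > 0" using Fpos elim(5) by simp
      define A where "A = (\<Union>i\<in>{..<n}. \<Union>j\<in>{..<n}-{i}. {\<omega>\<in>space M. X i \<omega> > g \<and> X j \<omega> > g})"
      define C where "C = {\<omega>\<in>space M. (MAX i\<in>{..<n}. X i \<omega>) > x - real (n-1) * K}"
      define D where "D = (\<Union>k\<in>{..<n}. \<Union>j\<in>{..<n}-{k}. {\<omega>\<in>space M. X k \<omega> > y \<and> X j \<omega> > K})"
      have Aev: "A \<in> events" unfolding A_def by (intro sets.finite_UN) auto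
      have Cev: "C \<in> events" unfolding C_def by measurable
      have Dev: "D \<in> events" unfolding D_def by (intro sets.finite_UN) auto
      have incl: "{\<omega>\<in>space M. (\<Sum>i<n. X i \<omega>) > x} \<subseteq> A \<union> C \<union> D"
      proof
        fix \<omega> assume "\<omega> \<in> {\<omega>\<in>space M. (\<Sum>i<n. X i \<omega>) > x}"
        then have \<omega>: "\<omega> \<in> space M" "(\<Sum>i<n. X i \<omega>) > x" by auto
        show "\<omega> \<in> A \<union> C \<union> D"
        proof (rule ccontr)
          assume nin: "\<omega> \<notin> A \<union> C \<union> D"
          obtain k where k: "k < n" "X k \<omega> > g"
          proof (rule ccontr)
            assume "\<not> thesis"
            then have "\<forall>i<n. X i \<omega> \<le> g" using that by (meson not_le)
            then have "(\<Sum>i<n. X i \<omega>) \<le> (\<Sum>i<n. g)" by (intro sum_mono) auto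
            then show False using g \<omega> by simp
          qed
          have lg: "X j \<omega> \<le> g" if j: "j \<in> {..<n}-{k}" for j
          proof (rule ccontr)
            assume "\<not> X j \<omega> \<le> g"
            then have "\<omega> \<in> {\<omega>\<in>space M. X k \<omega> > g \<and> X j \<omega> > g}" using k \<omega> by simp
            then have "\<omega> \<in> A" using k j unfolding A_def by blast
            then show False using nin by blast
          qed
          have "(\<Sum>j\<in>{..<n}-{k}. X j \<omega>) \<le> (\<Sum>j\<in>{..<n}-{k}. g)" using lg by (intro sum_mono) auto
          then have "(\<Sum>j\<in>{..<n}-{k}. X j \<omega>) \<le> (real n - 1) * g" using cardk[OF k(1)] by simp
          moreover have "y = x - (real n - 1) * g" unfolding y_def g_def rn1 by (simp add: mult.assoc)
          ultimately have "X k \<omega> > y" using Sdecomp[OF k(1), of \<omega>] \<omega>(2) by linarith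
          have lK: "X j \<omega> \<le> K" if j: "j \<in> {..<n}-{k}" for j
          proof (rule ccontr)
            assume "\<not> X j \<omega> \<le> K"
            then have "\<omega> \<in> {\<omega>\<in>space M. X k \<omega> > y \<and> X j \<omega> > K}" using \<open>X k \<omega> > y\<close> \<omega> by simp
            then have "\<omega> \<in> D" using k j unfolding D_def by blast
            then show False using nin by blast
          qed
          have "(\<Sum>j\<in>{..<n}-{k}. X j \<omega>) \<le> (\<Sum>j\<in>{..<n}-{k}. K)" using lK by (intro sum_mono) auto
          then have "(\<Sum>j\<in>{..<n}-{k}. X j \<omega>) \<le> (real n - 1) * K" using cardk[OF k(1)] by simp
          then have "X k \<omega> > x - real (n-1) * K" using Sdecomp[OF k(1), of \<omega>] \<omega>(2) rn1
            unfolding rn1 by linarith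
          moreover have "X k \<omega> \<le> (MAX i\<in>{..<n}. X i \<omega>)" using k by (intro Max_ge) auto
          ultimately have "\<omega> \<in> C" using \<omega> unfolding C_def by simp
          then show False using nin by simp
        qed
      qed
      have "St x \<le> prob (A \<union> C \<union> D)"
        unfolding St_def tail_def using incl Aev Cev Dev by (intro finite_measure_mono) auto
      also have "\<dots> \<le> prob (A \<union> C) + prob D" using Aev Cev Dev by (intro measure_subadditive) auto
      also have "\<dots> \<le> prob A + prob C + prob D" using Aev Cev by (simp add: measure_subadditive)
      finally have S1: "St x \<le> prob A + prob C + prob D" .
      have "prob A \<le> (\<Sum>i<n. \<Sum>j\<in>{..<n}-{i}. prob {\<omega>\<in>space M. X i \<omega> > g \<and> X j \<omega> > g})"
        unfolding A_def by (rule prob_UN2) auto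
      also have "\<dots> = (\<Sum>i<n. \<Sum>j\<in>{..<n}-{i}. T i g * T j g)"
        by (intro sum.cong refl prod) auto
      also have "\<dots> = R x * Fb x"
        unfolding R_def sum_distrib_right using Fx by (intro sum.cong refl) (simp add: g_def)
      also have "\<dots> \<le> \<epsilon>/3 * Fb x" using elim(2) Fx by simp
      finally have PA: "prob A \<le> \<epsilon>/3 * Fb x" .
      have "prob C = Fb (x + (- (real (n-1) * K)))" unfolding C_def Fb_def tail_def by simp
      also have "\<dots> \<le> (1 + \<epsilon>/3) * Fb x" using elim(1) Fx by (simp add: divide_less_eq)
      finally have PC: "prob C \<le> (1 + \<epsilon>/3) * Fb x" .
      have "prob D \<le> (\<Sum>k<n. \<Sum>j\<in>{..<n}-{k}. prob {\<omega>\<in>space M. X k \<omega> > y \<and> X j \<omega> > K})"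
        unfolding D_def by (rule prob_UN2) auto
      also have "\<dots> = (\<Sum>k<n. \<Sum>j\<in>{..<n}-{k}. T k y * T j K)"
        by (intro sum.cong refl prod) auto
      also have "\<dots> \<le> (\<Sum>k<n. \<Sum>j<n. T k y * T j K)"
        by (intro sum_mono sum_mono2) (auto intro: mult_nonneg_nonneg Tnn)
      also have "\<dots> = (\<Sum>k<n. T k y) * (\<Sum>j<n. T j K)"
        by (simp add: sum_product)
      also have "\<dots> \<le> (real n * Fb y) * \<eta>"
      proof (intro mult_mono)
        have "(\<Sum>k<n. T k y) \<le> (\<Sum>k<n. Fb y)" by (intro sum_mono T_le_F) auto
        then show "(\<Sum>k<n. T k y) \<le> real n * Fb y" by simp
      qed (use K in \<open>auto intro: Fnn sum_nonneg Tnn mult_nonneg_nonneg\<close>)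
      also have "\<dots> \<le> (real n * (B * Fb x)) * \<eta>"
        using elim(4) \<eta> npos by (intro mult_right_mono mult_left_mono) (auto simp: y_def)
      also have "\<dots> = \<epsilon>/3 * Fb x" using npos B by (simp add: \<eta>_def field_simps)
      finally have PD: "prob D \<le> \<epsilon>/3 * Fb x" .
      have "(1+\<epsilon>)*Fb x = \<epsilon>/3 * Fb x + (1 + \<epsilon>/3) * Fb x + \<epsilon>/3 * Fb x" by (simp add: algebra_simps)
      then show ?case using S1 PA PC PD by linarith
    qed
  qed
  have St_F: "((\<lambda>x. St x / Fb x) \<longlongrightarrow> 1) at_top"
    unfolding tendsto_iff
  proof (intro allI impI)
    fix e :: real assume e: "e > 0"
    define \<epsilon> where "\<epsilon> = min (e/2) 1"
    have \<epsilon>: "0 < \<epsilon>" "\<epsilon> \<le> 1" "\<epsilon> < e" using e by (auto simp: \<epsilon>_def)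
    show "eventually (\<lambda>x. dist (St x / Fb x) 1 < e) at_top"
      using lower[OF \<epsilon>(1,2)] upper[OF \<epsilon>(1)] eventually_ge_at_top[of 0]
    proof eventually_elim
      case (elim x)
      have Fx: "Fb x > 0" using Fpos elim(3) by simp
      have "1 - \<epsilon> \<le> St x / Fb x" using elim(1) Fx by (simp add: le_divide_eq)
      moreover have "St x / Fb x \<le> 1 + \<epsilon>" using elim(2) Fx by (simp add: divide_le_eq)
      ultimately show ?case using \<epsilon>(3) by (simp add: dist_real_def abs_le_iff)
    qed
  qed
  have "St \<sim>[at_top] Fb" by (rule asymp_equivI'[OF St_F])
  also have "Fb \<sim>[at_top] (\<lambda>x. \<Sum>i<n. T i x)" by (rule asymp_equiv_symI[OF asymp_equivI'[OF sumT_F]])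
  finally show ?thesis .
qed

end

theorem corollary3p3:
  fixes M :: "'a measure" and X :: "nat \<Rightarrow> 'a \<Rightarrow> real" and n :: nat
  assumes "prob_space M"
    and "n \<ge> 2"
    and "\<And>i. i < n \<Longrightarrow> X i \<in> borel_measurable M"
    and "prob_space.indep_vars M (\<lambda>_. borel) X {..<n}"
    and "\<And>i. i < n \<Longrightarrow> tail M (X i) 0 > 0"
    and "long_tailed (tail M (\<lambda>\<omega>. MAX i\<in>{..<n}. X i \<omega>))"
    and "(\<exists>h. (\<forall>x. h x > 0)
              \<and> GMDA (tail M (\<lambda>\<omega>. MAX i\<in>{..<n}. X i \<omega>)) h
              \<and> long_tailed (tail M (\<lambda>\<omega>. MAX i\<in>{..<n}. X i \<omega>))
              \<and> (\<exists>L>0. \<forall>i<n. \<forall>j<n. i \<noteq> j \<longrightarrow>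
                   ((\<lambda>x. tail M (X i) (L * h x) * tail M (X j) (L * h x)
                         / tail M (\<lambda>\<omega>. MAX i\<in>{..<n}. X i \<omega>) x) \<longlongrightarrow> 0) at_top))
        \<or> (\<exists>h \<in> H_star (tail M (\<lambda>\<omega>. MAX i\<in>{..<n}. X i \<omega>)).
              (\<exists>L>0. \<forall>i<n. \<forall>j<n. i \<noteq> j \<longrightarrow>
                   ((\<lambda>x. tail M (X i) (L * h x) * tail M (X j) (L * h x)
                         / tail M (\<lambda>\<omega>. MAX i\<in>{..<n}. X i \<omega>) x) \<longlongrightarrow> 0) at_top))"
  shows "(\<lambda>x. tail M (\<lambda>\<omega>. \<Sum>i<n. X i \<omega>) x) \<sim>[at_top] (\<lambda>x. \<Sum>i<n. tail M (X i) x)"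
  proof -
  interpret prob_space M by fact
  define Y where "Y i = (if i < n then X i else (\<lambda>_. 0::real))" for i
  have Ym: "\<And>i. Y i \<in> borel_measurable M" using assms(3) by (simp add: Y_def)
  have maxeq: "(\<lambda>\<omega>. MAX i\<in>{..<n}. Y i \<omega>) = (\<lambda>\<omega>. MAX i\<in>{..<n}. X i \<omega>)"
    by (intro ext arg_cong[where f=Max] image_cong) (auto simp: Y_def)
  have sumeq: "(\<lambda>\<omega>. \<Sum>i<n. Y i \<omega>) = (\<lambda>\<omega>. \<Sum>i<n. X i \<omega>)"
    by (intro ext sum.cong) (auto simp: Y_def)
  have indY: "indep_vars (\<lambda>_. borel) Y {..<n}"
    using assms(4) by (subst indep_vars_cong[of _ _ _ X _ "\<lambda>_. borel"]) (auto simp: Y_def)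
  define Fb where "Fb = tail M (\<lambda>\<omega>. MAX i\<in>{..<n}. X i \<omega>)"
  have Mxm: "(\<lambda>\<omega>. MAX i\<in>{..<n}. X i \<omega>) \<in> borel_measurable M"
    using Ym unfolding maxeq[symmetric] by measurable
  have anti: "\<And>x y. x \<le> y \<Longrightarrow> Fb y \<le> Fb x" unfolding Fb_def using Mxm by (intro tail_antimono)
  have lt: "long_tailed Fb" using assms(6) by (simp add: Fb_def)
  then have pos: "\<forall>x\<ge>0. Fb x > 0" unfolding long_tailed_def by auto
  have lim0: "(Fb \<longlongrightarrow> 0) at_top" unfolding Fb_def using Mxm by (rule tail_tendsto0)
  obtain h L where hyp: "((\<forall>x. h x > 0) \<and> GMDA Fb h) \<or> h \<in> H_star Fb" and L: "L > 0"
    and dag: "\<forall>i<n. \<forall>j<n. i \<noteq> j \<longrightarrow> ((\<lambda>x. tail M (X i) (L * h x) * tail M (X j) (L * h x) / Fb x) \<longlongrightarrow> 0) at_top"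
    using assms(7) unfolding Fb_def[symmetric] by blast
  have n0: "real n * L > 0" "real (n-1) * L > 0" using assms(2) L by auto
  from extract_props[OF anti pos lim0 n0(1) hyp] have hp: "eventually (\<lambda>x. h x > 0) at_top"
    and hs: "eventually (\<lambda>x. (real n * L) * h x < x) at_top" by auto
  from extract_props[OF anti pos lim0 n0(2) hyp] obtain B where
    B: "B > 0" "eventually (\<lambda>x. Fb (x - (real (n-1) * L) * h x) \<le> B * Fb x) at_top" by auto
  have Teq: "i < n \<Longrightarrow> tail M (Y i) = tail M (X i)" for i by (simp add: Y_def)
  have dagY: "\<forall>i<n. \<forall>j<n. i \<noteq> j \<longrightarrow> ((\<lambda>x. (\<lambda>i. tail M (Y i)) i (L * h x) * (\<lambda>i. tail M (Y i)) j (L * h x) / Fb x) \<longlongrightarrow> 0) at_top"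
    using dag Teq by simp
  have "tail M (\<lambda>\<omega>. \<Sum>i<n. Y i \<omega>) \<sim>[at_top] (\<lambda>x. \<Sum>i<n. (\<lambda>i. tail M (Y i)) i x)"
    by (rule main[OF Ym assms(2) indY _ refl refl lt L hp hs B dagY]) (simp add: Fb_def maxeq)
  moreover have "(\<lambda>x. \<Sum>i<n. (\<lambda>i. tail M (Y i)) i x) = (\<lambda>x. \<Sum>i<n. tail M (X i) x)"
    using Teq by (intro ext sum.cong) auto
  ultimately show ?thesis unfolding sumeq by simp
qed

end
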